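(* Let $(\Omega,\mathcal G,\mathbb P)$ be a probability space, $\mathcal F=(\mathcal F_n)_{n\in\mathbb N_0}$ a filtration on $\Omega$ with $\mathcal F_\infty\subset\mathcal G$, $(E,\mathcal E)$ a measurable space, and $Y=(Y_n)_{n\in\mathbb N}$ an $\mathcal F$-adapted sequence of $(E,\mathcal E)$-valued random elements such that for every $i\in\mathbb N_0$, $Y_{i+1}$ is independent of $\mathcal F_i$ and has the same law as $Y_1$. Let $\mathcal L$ be the law of $Y$ on $(E^{\mathbb N},\mathcal E^{\otimes\mathbb N})$. Let $R:\Omega\to\mathbb N_0\cup\{\infty\}$ be $\mathcal G$-measurable with $\mathbb P(R<\infty)>0$. Consider the statements: (a) $\mathcal F_R'$ is independent of $\Box_RY$ under $\mathbb P'$; (b) there are $G\in\mathcal E^{\otimes\mathbb N}$ and, for every $n\in\mathbb N_0$ with $\mathbb P(R=n)>0$, an $F_n\in\mathcal F_n$, such that a.s. $\{R=n\}=F_n\cap\{\Box_nY\in G\}$; (i) $\mathcal F_R'$ is independent of $\Box_RY$ under $\mathbb P'$ and the law of $\Box_RY$ under $\mathbb P'$ is $\mathcal L$; (ii) $R$ is a stopping time relative to the completion of $\mathcal F$. Then (b) implies (a), and (ii) implies (i). If in addition $\{R=n\}\in\overline{\mathcal F_n\vee\sigma(\Box_nY)}$ for each $n\in\mathbb N_0$, then (a) implies (b) and (i) implies (ii). Moreover, when (b) holds, $G$ is $\mathcal L$-a.s. unique, the $F_n$ are a.s. unique, and the law of $\Box_RY$ under $\mathbb P'$ equals $\mathbb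 P(Y\in\cdot\mid Y\in G)=\mathcal L(\cdot\mid G)$.
   Context: For $n\in\mathbb N_0$, $\Box_nY:=(Y_{n+i})_{i\in\mathbb N}$, and on $\{R<\infty\}$, $\Box_RY:=(Y_{R+i})_{i\in\mathbb N}$. $\mathcal F_R'$ is the $\sigma$-field on $\{R<\infty\}$ generated by the maps $Z_R$ (restricted to $\{R<\infty\}$) as $Z$ ranges over all $\mathcal F$-adapted real-valued processes $Z=(Z_n)_{n\in\mathbb N_0}$. $\mathbb P'$ is the probability $A\mapsto\mathbb P(A\mid R<\infty)$ on the trace $\sigma$-field $\mathcal G|_{\{R<\infty\}}$. For a sub-$\sigma$-field $\mathcal H\subset\mathcal G$, $\overline{\mathcal H}$ denotes the $\sigma$-field generated by $\mathcal H$ and the $\mathbb P$-negligible sets of $\mathcal G$; the completion of a filtration is obtained by completing each member. "a.s." refers to $\mathbb P$. *)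

theory Defs
  imports "HOL-Probability.Probability"
begin

text \<open>Shifted sequence: box n Y w = (Y_(n+1), Y_(n+2), ...); index i of the result
  (i = 0,1,2,...) corresponds to the paper's index i+1.\<close>
definition box :: "nat \<Rightarrow> (nat \<Rightarrow> 'a \<Rightarrow> 'b) \<Rightarrow> 'a \<Rightarrow> nat \<Rightarrow> 'b" where
  "box n Y w = (\<lambda>i. Y (n + Suc i) w)"

abbreviation seqspace :: "'b measure \<Rightarrow> (nat \<Rightarrow> 'b) measure" where
  "seqspace E \<equiv> PiM UNIV (\<lambda>_. E)"

definition fin_set :: "'a measure \<Rightarrow> ('a \<Rightarrow> enat) \<Rightarrow> 'a set" where
  "fin_set M R = {w \<in> space M. R w \<noteq> \<infinity>}"

definition boxR :: "('a \<Rightarrow> enat) \<Rightarrow> (nat \<Rightarrow> 'a \<Rightarrow> 'b) \<Rightarrow> 'a \<Rightarrow> nat \<Rightarrow> 'b" where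
  "boxR R Y w = box (the_enat (R w)) Y w"

definition condP :: "'a measure \<Rightarrow> ('a \<Rightarrow> enat) \<Rightarrow> 'a measure" where
  "condP M R = measure_of (fin_set M R) (sets (restrict_space M (fin_set M R)))
     (\<lambda>A. emeasure M A / emeasure M (fin_set M R))"

definition FR' :: "'a measure \<Rightarrow> (nat \<Rightarrow> 'a measure) \<Rightarrow> ('a \<Rightarrow> enat) \<Rightarrow> 'a set set" where
  "FR' M F R = sigma_sets (fin_set M R)
     {(\<lambda>w. Z (the_enat (R w)) w) -` B \<inter> fin_set M R | Z B.
        (\<forall>n. Z n \<in> borel_measurable (F n)) \<and> B \<in> sets (borel :: real measure)}"

definition sigma_boxR :: "'a measure \<Rightarrow> 'b measure \<Rightarrow> ('a \<Rightarrow> enat) \<Rightarrow> (nat \<Rightarrow> 'a \<Rightarrow> 'b) \<Rightarrow> 'a set set" where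
  "sigma_boxR M E R Y = {boxR R Y -` A \<inter> fin_set M R | A. A \<in> sets (seqspace E)}"

definition sigma_box :: "'a measure \<Rightarrow> 'b measure \<Rightarrow> nat \<Rightarrow> (nat \<Rightarrow> 'a \<Rightarrow> 'b) \<Rightarrow> 'a set set" where
  "sigma_box M E n Y = {box n Y -` A \<inter> space M | A. A \<in> sets (seqspace E)}"

definition compl_sets :: "'a measure \<Rightarrow> 'a set set \<Rightarrow> 'a set set" where
  "compl_sets M H = sigma_sets (space M) (H \<union> null_sets M)"

definition law :: "'a measure \<Rightarrow> 'b measure \<Rightarrow> (nat \<Rightarrow> 'a \<Rightarrow> 'b) \<Rightarrow> (nat \<Rightarrow> 'b) measure" where
  "law M E Y = distr M (seqspace E) (box 0 Y)"

definition stmt_a where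
  "stmt_a M F E Y R \<longleftrightarrow> prob_space.indep_set (condP M R) (FR' M F R) (sigma_boxR M E R Y)"

definition b_witness where
  "b_witness M F E Y R G Fn \<longleftrightarrow> G \<in> sets (seqspace E) \<and>
     (\<forall>n::nat. measure M {w \<in> space M. R w = enat n} > 0 \<longrightarrow>
        Fn n \<in> sets (F n) \<and>
        (AE w in M. (R w = enat n \<longleftrightarrow> w \<in> Fn n \<and> box n Y w \<in> G)))"

definition stmt_b where
  "stmt_b M F E Y R \<longleftrightarrow> (\<exists>G Fn. b_witness M F E Y R G Fn)"

definition stmt_i where
  "stmt_i M F E Y R \<longleftrightarrow> stmt_a M F E Y R \<and>
     distr (condP M R) (seqspace E) (boxR R Y) = law M E Y"

definition stmt_ii where
  "stmt_ii M F R \<longleftrightarrow> (\<forall>n::nat. {w \<in> space M. R w \<le> enat n} \<in> compl_sets M (sets (F n)))"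

end

theory Submission imports Defs begin

locale thm_setup = prob_space M for M :: "'a measure" +
  fixes F :: "nat \<Rightarrow> 'a measure" and E :: "'b measure" and Y :: "nat \<Rightarrow> 'a \<Rightarrow> 'b"
    and R :: "'a \<Rightarrow> enat"
  assumes filt: "filtration (space M) F"
    and subF: "\<And>n. sets (F n) \<subseteq> sets M"
    and Ymeas: "\<And>n. n \<ge> 1 \<Longrightarrow> Y n \<in> measurable (F n) E"
    and indepY: "\<And>i. prob_space.indep_set M (sets (F i))
                {Y (Suc i) -` A \<inter> space M | A. A \<in> sets E}"
    and identY: "\<And>i. distr M E (Y (Suc i)) = distr M E (Y 1)"
    and Rmeas: "R \<in> measurable M (count_space UNIV)"
    and posfin: "measure M {w \<in> space M. R w \<noteq> \<infinity>} > 0"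
begin

lemma spF: "space (F n) = space M"
  using filtration.space_F[OF filt] by simp

lemma monoF: "m \<le> n \<Longrightarrow> sets (F m) \<subseteq> sets (F n)"
  using filtration.sets_F_mono[OF filt] by simp

lemma subalg: "subalgebra M (F n)"
  unfolding subalgebra_def using spF subF by simp

lemma YmeasF: "Y (Suc i) \<in> measurable (F (Suc i)) E"
  using Ymeas by simp

lemma YmeasM: "Y (Suc i) \<in> measurable M E"
  using measurable_from_subalg[OF subalg YmeasF] .

lemma Y_space: "w \<in> space M \<Longrightarrow> Y (Suc i) w \<in> space E"
  using measurable_space[OF YmeasM] by blast

lemma Y_sets_le: "Suc i \<le> n \<Longrightarrow> A \<in> sets E \<Longrightarrow> Y (Suc i) -` A \<inter> space M \<in> sets (F n)"
  using measurable_sets[OF YmeasF, of A] spF monoF[of "Suc i" n] by auto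

lemma box_meas: "box n Y \<in> measurable M (seqspace E)"
  unfolding box_def
proof (rule measurable_PiM_single')
  fix i :: nat show "(\<lambda>w. Y (n + Suc i) w) \<in> measurable M E"
    using YmeasM[of "n+i"] by simp
next
  show "(\<lambda>w i. Y (n + Suc i) w) \<in> space M \<rightarrow> (\<Pi>\<^sub>E i\<in>UNIV. space E)"
    using Y_space by (auto simp: Pi_iff)
qed

lemma box_space: "w \<in> space M \<Longrightarrow> box n Y w \<in> space (seqspace E)"
  using measurable_space[OF box_meas] by blast

lemma indepD: "D \<in> sets (F i) \<Longrightarrow> A \<in> sets E \<Longrightarrow>
  prob (D \<inter> (Y (Suc i) -` A \<inter> space M)) = prob D * prob (Y 1 -` A \<inter> space M)"
proof -
  assume D: "D \<in> sets (F i)" and A: "A \<in> sets E"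
  have "prob (D \<inter> (Y (Suc i) -` A \<inter> space M)) = prob D * prob (Y (Suc i) -` A \<inter> space M)"
    using indep_setD[OF indepY[of i] D] A by blast
  moreover have "prob (Y (Suc i) -` A \<inter> space M) = prob (Y 1 -` A \<inter> space M)"
    using measure_distr[OF YmeasM A, of i] measure_distr[OF YmeasM[of 0] A] identY[of i] by simp
  ultimately show ?thesis by simp
qed

lemma fut_cyl:
  assumes D: "D \<in> sets (F n)" and A: "\<And>i. A i \<in> sets E"
  shows "prob (D \<inter> {w\<in>space M. \<forall>i<k. Y (n + Suc i) w \<in> A i})
     = prob D * (\<Prod>i<k. prob (Y 1 -` A i \<inter> space M))"
proof (induction k)
  case 0
  have "D \<subseteq> space M" using sets.sets_into_space[OF D] spF[of n] by simp
  then show ?case by (simp add: Int_absorb2)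
next
  case (Suc k)
  let ?C = "{w\<in>space M. \<forall>i<k. Y (n + Suc i) w \<in> A i}"
  have C: "?C = {w\<in>space (F (n+k)). \<forall>i\<in>{..<k}. Y (Suc (n + i)) w \<in> A i}" using spF by auto
  have "?C \<in> sets (F (n + k))"
    unfolding C
  proof (rule sets.sets_Collect_finite_All)
    fix i assume "i \<in> {..<k}"
    then show "{w\<in>space (F (n+k)). Y (Suc (n + i)) w \<in> A i} \<in> sets (F (n+k))"
    proof -
      have "{w\<in>space (F (n+k)). Y (Suc (n + i)) w \<in> A i} = Y (Suc (n+i)) -` A i \<inter> space M"
        using spF[of "n+k"] by auto
      then show ?thesis using Y_sets_le[of "n+i" "n+k" "A i"] A \<open>i \<in> {..<k}\<close> by simp
    qed
  qed simp
  moreover have "D \<in> sets (F (n + k))" using D monoF[of n "n+k"] by auto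
  ultimately have DC: "D \<inter> ?C \<in> sets (F (n+k))" by (intro sets.Int[of D "F (n+k)"])
  have eq: "D \<inter> {w\<in>space M. \<forall>i<Suc k. Y (n + Suc i) w \<in> A i}
     = (D \<inter> ?C) \<inter> (Y (Suc (n + k)) -` A k \<inter> space M)"
    by (auto simp: less_Suc_eq)
  have "prob ((D \<inter> ?C) \<inter> (Y (Suc (n + k)) -` A k \<inter> space M))
     = prob (D \<inter> ?C) * prob (Y 1 -` A k \<inter> space M)"
    by (rule indepD[OF DC A])
  also have "\<dots> = prob D * (\<Prod>i<k. prob (Y 1 -` A i \<inter> space M)) * prob (Y 1 -` A k \<inter> space M)"
    using Suc.IH by simp
  finally show ?case using eq by (simp add: mult.assoc)
qed

lemma F_sets_M: "D \<in> sets (F n) \<Longrightarrow> D \<in> sets M"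
  using subF by blast

lemma box_pre_cyl:
  assumes J: "J \<subseteq> {..<k}" and B: "\<And>i. i \<in> J \<Longrightarrow> B i \<in> sets E"
  shows "box m Y -` prod_emb UNIV (\<lambda>_. E) J (Pi\<^sub>E J B) \<inter> space M
     = {w\<in>space M. \<forall>i<k. Y (m + Suc i) w \<in> (if i \<in> J then B i else space E)}"
  using J Y_space unfolding box_def
  by (auto simp: prod_emb_iff PiE_iff restrict_def extensional_def) (use J in blast)

lemma fut_meas:
  assumes D: "D \<in> sets (F n)" and A: "A \<in> sets (seqspace E)"
  shows "prob (D \<inter> (box n Y -` A \<inter> space M)) = prob D * prob (box 0 Y -` A \<inter> space M)"
proof -
  have DM: "D \<in> sets M" using F_sets_M[OF D] .
  let ?P = "distr (density M (indicator D)) (seqspace E) (box n Y)"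
  let ?Q = "density (distr M (seqspace E) (box 0 Y)) (\<lambda>_. ennreal (prob D))"
  have bm: "box n Y \<in> measurable (density M (indicator D)) (seqspace E)"
    using box_meas by (simp add: measurable_cong_sets[OF sets_density refl])
  have "?P = ?Q"
  proof (rule measure_eqI_PiM_infinite)
    show "sets ?P = sets (seqspace E)" by simp
    show "sets ?Q = sets (seqspace E)" by simp
    interpret fD: finite_measure "density M (indicator D)"
      using finite_measure_restricted[OF DM] .
    show "finite_measure ?P" by (rule fD.finite_measure_distr[OF bm])
  next
    fix J :: "nat set" and B assume J: "finite J" "J \<subseteq> UNIV" and B: "\<And>i. i \<in> J \<Longrightarrow> B i \<in> sets E"
    obtain k where k: "J \<subseteq> {..<k}" using finite_nat_bounded[OF J(1)] by blast
    let ?X = "prod_emb UNIV (\<lambda>_. E) J (Pi\<^sub>E J B)"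
    let ?A = "\<lambda>i. if i \<in> J then B i else space E"
    have A': "\<And>i. ?A i \<in> sets E" using B by auto
    have X: "?X \<in> sets (seqspace E)"
      using B J by (intro sets_PiM_I) auto
    have s0: "space M \<in> sets (F 0)" using sets.top[of "F 0"] spF by simp
    have pn: "box n Y -` ?X \<inter> space M = {w\<in>space M. \<forall>i<k. Y (n + Suc i) w \<in> ?A i}"
      by (rule box_pre_cyl[OF k B])
    have p0: "box 0 Y -` ?X \<inter> space M = {w\<in>space M. \<forall>i<k. Y (0 + Suc i) w \<in> ?A i}"
      by (rule box_pre_cyl[OF k B])
    have c1: "prob (D \<inter> {w\<in>space M. \<forall>i<k. Y (n + Suc i) w \<in> ?A i}) = prob D * (\<Prod>i<k. prob (Y 1 -` ?A i \<inter> space M))"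
      by (rule fut_cyl[OF D A'])
    have c0: "prob (space M \<inter> {w\<in>space M. \<forall>i<k. Y (0 + Suc i) w \<in> ?A i}) = prob (space M) * (\<Prod>i<k. prob (Y 1 -` ?A i \<inter> space M))"
      by (rule fut_cyl[OF s0 A'])
    have "emeasure ?P ?X = emeasure M (D \<inter> (box n Y -` ?X \<inter> space M))"
      using X bm by (simp add: emeasure_distr emeasure_restricted DM box_meas[THEN measurable_sets])
    also have "\<dots> = ennreal (prob D * (\<Prod>i<k. prob (Y 1 -` ?A i \<inter> space M)))"
      unfolding pn c1[symmetric] by (simp add: emeasure_eq_measure)
    also have "\<dots> = ennreal (prob D) * ennreal (prob (space M \<inter> (box 0 Y -` ?X \<inter> space M)))"
      unfolding p0 c0 by (simp add: ennreal_mult prob_space prod_nonneg)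
    also have "\<dots> = emeasure ?Q ?X"
      using X by (simp add: emeasure_density_const emeasure_distr box_meas emeasure_eq_measure Int_absorb1)
    finally show "emeasure ?P ?X = emeasure ?Q ?X" .
  qed
  then have "measure ?P A = measure ?Q A" by simp
  moreover have "measure ?P A = prob (D \<inter> (box n Y -` A \<inter> space M))"
    using A bm by (simp add: measure_distr measure_restricted DM box_meas[THEN measurable_sets])
  moreover have "measure ?Q A = prob D * prob (box 0 Y -` A \<inter> space M)"
    using A by (simp add: measure_density_const measure_distr box_meas)
  ultimately show ?thesis by simp
qed

abbreviation "NN n \<equiv> {w \<in> space M. R w = enat n}"
abbreviation "fin \<equiv> fin_set M R"
abbreviation "LL S \<equiv> prob (box 0 Y -` S \<inter> space M)"

lemma NN_sets: "NN n \<in> sets M"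
proof -
  have "NN n = R -` {enat n} \<inter> space M" by auto
  then show ?thesis using measurable_sets[OF Rmeas, of "{enat n}"] by simp
qed

lemma fin_sub: "fin \<subseteq> space M" unfolding fin_set_def by auto

lemma fin_UN: "fin = (\<Union>n. NN n)"
  unfolding fin_set_def by auto

lemma NN_sub_fin: "NN n \<subseteq> fin" unfolding fin_set_def by auto

lemma fin_sets: "fin \<in> sets M"
  unfolding fin_UN using NN_sets by auto

lemma NN_disj: "disjoint_family NN"
  unfolding disjoint_family_on_def by auto

lemma p_pos: "prob fin > 0"
  using posfin unfolding fin_set_def by simp

lemma fin_NN_ex: "\<exists>n. prob (NN n) > 0"
proof (rule ccontr)
  assume "\<not> ?thesis"
  then have z: "\<And>n. prob (NN n) = 0" using measure_nonneg[of M] by (metis linorder_not_le order_antisym)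
  have "(\<lambda>n. prob (NN n)) sums prob (\<Union>n. NN n)"
    using finite_measure_UNION[OF _ NN_disj] NN_sets by auto
  then have "prob fin = 0" unfolding fin_UN using z by (simp add: sums_0 sums_unique2)
  then show False using p_pos by simp
qed

lemma restr_Pow: "sets (restrict_space M fin) \<subseteq> Pow fin"
  using sets.space_closed[of "restrict_space M fin"] fin_sets by simp

lemma sets_condP: "sets (condP M R) = sets (restrict_space M fin)"
proof -
  have "sets (condP M R) = sigma_sets fin (sets (restrict_space M fin))"
    unfolding condP_def by (rule sets_measure_of[OF restr_Pow])
  also have "\<dots> = sets (restrict_space M fin)"
    using sets.sigma_sets_eq[of "restrict_space M fin"] fin_sets by simp
  finally show ?thesis .
qed

lemma sets_condP_iff: "X \<in> sets (condP M R) \<longleftrightarrow> X \<in> sets M \<and> X \<subseteq> fin"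
  unfolding sets_condP using sets_restrict_space_iff[of fin M X] fin_sets fin_sub
  by (simp add: Int_absorb2 conj_commute)

lemma space_condP: "space (condP M R) = fin"
  unfolding condP_def by (rule space_measure_of[OF restr_Pow])

lemma emeasure_condP: "X \<in> sets M \<Longrightarrow> X \<subseteq> fin \<Longrightarrow> emeasure (condP M R) X = emeasure M X / emeasure M fin"
  unfolding condP_def
proof (rule emeasure_measure_of_sigma)
  show "sigma_algebra fin (sets (restrict_space M fin))"
    using sets.sigma_algebra_axioms[of "restrict_space M fin"] fin_sets by simp
  show "positive (sets (restrict_space M fin)) (\<lambda>A. emeasure M A / emeasure M fin)"
    unfolding positive_def by simp
  show "countably_additive (sets (restrict_space M fin)) (\<lambda>A. emeasure M A / emeasure M fin)"
    unfolding countably_additive_def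
  proof (intro allI impI)
    fix A :: "nat \<Rightarrow> 'a set" assume A: "range A \<subseteq> sets (restrict_space M fin)" "disjoint_family A"
    then have "range A \<subseteq> sets M" using sets_restrict_space_iff[of fin M] fin_sets fin_sub
      by (auto simp: Int_absorb2)
    then show "(\<Sum>i. emeasure M (A i) / emeasure M fin) = emeasure M (\<Union> (range A)) / emeasure M fin"
      using suminf_emeasure[OF _ A(2)] by simp
  qed
  assume "X \<in> sets M" "X \<subseteq> fin"
  then show "X \<in> sets (restrict_space M fin)"
    using sets_restrict_space_iff[of fin M X] fin_sets fin_sub by (simp add: Int_absorb2)
qed

lemma measure_condP: "X \<in> sets M \<Longrightarrow> X \<subseteq> fin \<Longrightarrow> measure (condP M R) X = prob X / prob fin"
proof -
  assume X: "X \<in> sets M" "X \<subseteq> fin"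
  have "emeasure (condP M R) X = ennreal (prob X) / ennreal (prob fin)"
    using emeasure_condP[OF X] by (simp only: emeasure_eq_measure)
  also have "\<dots> = ennreal (prob X / prob fin)"
    using p_pos by (intro divide_ennreal) auto
  finally show ?thesis unfolding measure_def using p_pos by simp
qed

lemma prob_space_condP: "prob_space (condP M R)"
proof (rule prob_spaceI)
  have "emeasure (condP M R) fin = emeasure M fin / emeasure M fin"
    using emeasure_condP[OF fin_sets] by simp
  also have "\<dots> = 1" using p_pos
    by (simp add: emeasure_eq_measure divide_ennreal)
  finally show "emeasure (condP M R) (space (condP M R)) = 1" by (simp add: space_condP)
qed

lemma FR'_char:
  assumes "X \<in> FR' M F R"
  shows "X \<in> sets M \<and> X \<subseteq> fin \<and> (\<forall>n. \<exists>D\<in>sets (F n). X \<inter> NN n = D \<inter> NN n)"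
  using assms unfolding FR'_def
proof (induction rule: sigma_sets.induct)
  case (Basic a)
  then obtain Z B where a: "a = (\<lambda>w. Z (the_enat (R w)) w) -` B \<inter> fin"
    and Z': "\<forall>n. Z n \<in> borel_measurable (F n)" and B: "B \<in> sets (borel :: real measure)"
    by (simp only: mem_Collect_eq) (elim exE conjE, assumption)
  have Z: "\<And>n. Z n \<in> borel_measurable (F n)" using Z' by simp
  have Zs: "Z n -` B \<inter> space M \<in> sets (F n)" for n
    using measurable_sets[OF Z B, of n] spF by simp
  have eqn: "a \<inter> NN n = (Z n -` B \<inter> space M) \<inter> NN n" for n
    unfolding a fin_set_def by auto
  have "a = (\<Union>n. (Z n -` B \<inter> space M) \<inter> NN n)"
    unfolding a fin_set_def by auto
  moreover have "(\<Union>n. (Z n -` B \<inter> space M) \<inter> NN n) \<in> sets M"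
  proof (rule sets.countable_UN'')
    fix n show "(Z n -` B \<inter> space M) \<inter> NN n \<in> sets M"
      by (rule sets.Int[OF F_sets_M[OF Zs] NN_sets])
  qed simp
  moreover have "a \<subseteq> fin" unfolding a by auto
  moreover have "\<forall>n. \<exists>D\<in>sets (F n). a \<inter> NN n = D \<inter> NN n"
  proof
    fix n show "\<exists>D\<in>sets (F n). a \<inter> NN n = D \<inter> NN n" by (rule bexI[of _ "Z n -` B \<inter> space M"]) (use eqn Zs in auto)
  qed
  ultimately show ?case by simp
next
  case Empty
  have "\<forall>n. \<exists>D\<in>sets (F n). {} \<inter> NN n = D \<inter> NN n"
    using sets.empty_sets by auto
  then show ?case by simp
next
  case (Compl a)
  have "\<forall>n. \<exists>D\<in>sets (F n). (fin - a) \<inter> NN n = D \<inter> NN n"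
  proof
    fix n
    have "\<exists>D\<in>sets (F n). a \<inter> NN n = D \<inter> NN n" using Compl.IH by simp
    then obtain D where D: "D \<in> sets (F n)" "a \<inter> NN n = D \<inter> NN n" by (elim bexE)
    have "(fin - a) \<inter> NN n = NN n - a \<inter> NN n" using NN_sub_fin[of n] by blast
    also have "\<dots> = NN n - D \<inter> NN n" using D(2) by simp
    also have "\<dots> = (space M - D) \<inter> NN n" by blast
    finally have eq: "(fin - a) \<inter> NN n = (space M - D) \<inter> NN n" .
    have cs: "space M - D \<in> sets (F n)"
      using sets.compl_sets[OF D(1)] spF by simp
    show "\<exists>D\<in>sets (F n). (fin - a) \<inter> NN n = D \<inter> NN n"
      by (rule bexI[where x="space M - D"]) (rule eq, rule cs)
  qed
  moreover have "fin - a \<in> sets M" using Compl.IH fin_sets by auto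
  ultimately show ?case by simp
next
  case (Union A)
  have "\<forall>p. \<exists>D. D \<in> sets (F (snd p)) \<and> A (fst p) \<inter> NN (snd p) = D \<inter> NN (snd p)"
  proof
    fix p :: "nat \<times> nat"
    have "\<exists>D\<in>sets (F (snd p)). A (fst p) \<inter> NN (snd p) = D \<inter> NN (snd p)"
      using Union.IH by simp
    then show "\<exists>D. D \<in> sets (F (snd p)) \<and> A (fst p) \<inter> NN (snd p) = D \<inter> NN (snd p)"
      by (simp add: Bex_def)
  qed
  from choice[OF this] obtain f where f': "\<forall>p. f p \<in> sets (F (snd p)) \<and> A (fst p) \<inter> NN (snd p) = f p \<inter> NN (snd p)"
    by (elim exE)
  have f: "\<And>p. f p \<in> sets (F (snd p)) \<and> A (fst p) \<inter> NN (snd p) = f p \<inter> NN (snd p)"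
    using f' by (rule spec)
  define D where "D i n = f (i, n)" for i n
  have D: "D i n \<in> sets (F n)" "A i \<inter> NN n = D i n \<inter> NN n" for i n
    using f[of "(i, n)"] unfolding D_def by simp_all
  have "\<forall>n. \<exists>D\<in>sets (F n). (\<Union>i. A i) \<inter> NN n = D \<inter> NN n"
  proof
    fix n
    have "(\<Union>i. A i) \<inter> NN n = (\<Union>i. A i \<inter> NN n)" by blast
    also have "\<dots> = (\<Union>i. D i n \<inter> NN n)" using D(2)[of _ n] by simp
    also have "\<dots> = (\<Union>i. D i n) \<inter> NN n" by blast
    finally have eq: "(\<Union>i. A i) \<inter> NN n = (\<Union>i. D i n) \<inter> NN n" .
    have cs: "(\<Union>i. D i n) \<in> sets (F n)" using D(1) by (intro sets.countable_UN'') simp_all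
    show "\<exists>D\<in>sets (F n). (\<Union>i. A i) \<inter> NN n = D \<inter> NN n"
      by (rule bexI[where x="\<Union>i. D i n"]) (rule eq, rule cs)
  qed
  moreover have "(\<Union>i. A i) \<in> sets M" using Union.IH by (intro sets.countable_UN'') simp_all
  moreover have "(\<Union>i. A i) \<subseteq> fin" using Union.IH by auto
  ultimately show ?case by simp
qed

lemma FR'_basic:
  assumes Z: "\<And>n. Z n \<in> borel_measurable (F n)" and B: "B \<in> sets (borel :: real measure)"
  shows "(\<lambda>w. Z (the_enat (R w)) w) -` B \<inter> fin \<in> FR' M F R"
  unfolding FR'_def
  apply (rule sigma_sets.Basic)
  apply (rule CollectI)
  apply (rule exI[of _ Z])
  apply (rule exI[of _ B])
  using Z B by simp

lemma FR'_gen: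
  assumes D: "D \<in> sets (F n)"
  shows "D \<inter> NN n \<in> FR' M F R"
proof -
  define Z where "Z k w = (if k = n then indicator D w else (0::real))" for k w
  have Zm: "Z k \<in> borel_measurable (F k)" for k
    unfolding Z_def using D by (cases "k = n") auto
  have Dsub: "D \<subseteq> space M" using sets.sets_into_space[OF D] spF by simp
  have "(\<lambda>w. Z (the_enat (R w)) w) -` {1} \<inter> fin = D \<inter> NN n"
  proof (rule set_eqI)
    fix w
    show "w \<in> (\<lambda>w. Z (the_enat (R w)) w) -` {1} \<inter> fin \<longleftrightarrow> w \<in> D \<inter> NN n"
      unfolding Z_def fin_set_def using Dsub by (cases "R w") (auto simp: indicator_def)
  qed
  then show ?thesis using FR'_basic[OF Zm, of "{1}"] by simp
qed

lemma fin_FR': "fin \<in> FR' M F R"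
  unfolding FR'_def by (rule sigma_sets_top)

lemma boxR_pre:
  assumes A: "A \<in> sets (seqspace E)"
  shows "boxR R Y -` A \<inter> fin = (\<Union>n. NN n \<inter> (box n Y -` A \<inter> space M))"
    and "boxR R Y -` A \<inter> fin \<in> sets M"
proof -
  show eq: "boxR R Y -` A \<inter> fin = (\<Union>n. NN n \<inter> (box n Y -` A \<inter> space M))"
  proof (rule set_eqI)
    fix w show "w \<in> boxR R Y -` A \<inter> fin \<longleftrightarrow> w \<in> (\<Union>n. NN n \<inter> (box n Y -` A \<inter> space M))"
      unfolding boxR_def fin_set_def by (cases "R w") auto
  qed
  show "boxR R Y -` A \<inter> fin \<in> sets M"
    unfolding eq
  proof (rule sets.countable_UN'')
    fix n show "NN n \<inter> (box n Y -` A \<inter> space M) \<in> sets M"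
      by (rule sets.Int[OF NN_sets measurable_sets[OF box_meas A]])
  qed simp
qed

lemma boxR_NN: "X \<subseteq> fin \<Longrightarrow> X \<inter> (boxR R Y -` A \<inter> fin) \<inter> NN n = X \<inter> NN n \<inter> (box n Y -` A \<inter> space M)"
  unfolding boxR_def fin_set_def by (intro set_eqI) auto

lemma LL_nonneg: "LL S \<ge> 0" by simp

lemma box_pre_sets: "A \<in> sets (seqspace E) \<Longrightarrow> box n Y -` A \<inter> space M \<in> sets M"
  by (rule measurable_sets[OF box_meas])

lemma box_pre_space: "box n Y -` space (seqspace E) \<inter> space M = space M"
  using box_space by blast

lemma sum_NN:
  assumes S: "S \<in> sets M" "S \<subseteq> fin"
  shows "(\<lambda>n. prob (S \<inter> NN n)) sums prob S"
proof -
  have "S = (\<Union>n. S \<inter> NN n)" using S(2) unfolding fin_UN by blast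
  moreover have "(\<lambda>n. prob (S \<inter> NN n)) sums prob (\<Union>n. S \<inter> NN n)"
  proof (rule finite_measure_UNION)
    show "range (\<lambda>n. S \<inter> NN n) \<subseteq> events" using S(1) NN_sets by auto
    show "disjoint_family (\<lambda>n. S \<inter> NN n)" unfolding disjoint_family_on_def by auto
  qed
  ultimately show ?thesis by simp
qed

lemma boxR_meas_condP: "boxR R Y \<in> measurable (condP M R) (seqspace E)"
proof (rule measurableI)
  fix x assume "x \<in> space (condP M R)"
  then have "x \<in> space M" using fin_sub space_condP by auto
  then show "boxR R Y x \<in> space (seqspace E)" unfolding boxR_def by (rule box_space)
next
  fix A assume A: "A \<in> sets (seqspace E)"
  show "boxR R Y -` A \<inter> space (condP M R) \<in> sets (condP M R)"
    unfolding space_condP sets_condP_iff using boxR_pre(2)[OF A] by auto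
qed

lemma law_sets: "sets (law M E Y) = sets (seqspace E)" unfolding law_def by simp

lemma emeasure_law: "A \<in> sets (seqspace E) \<Longrightarrow> emeasure (law M E Y) A = ennreal (LL A)"
  unfolding law_def by (simp add: emeasure_distr box_meas emeasure_eq_measure)

lemma measure_law: "A \<in> sets (seqspace E) \<Longrightarrow> measure (law M E Y) A = LL A"
  unfolding law_def by (simp add: measure_distr box_meas)

context
  fixes G Fn
  assumes bw: "b_witness M F E Y R G Fn"
begin

lemma bwG: "G \<in> sets (seqspace E)" using bw unfolding b_witness_def by blast

lemma bwF: "prob (NN n) > 0 \<Longrightarrow> Fn n \<in> sets (F n)" using bw unfolding b_witness_def by blast

lemma bwAE: "prob (NN n) > 0 \<Longrightarrow> AE w in M. (R w = enat n \<longleftrightarrow> w \<in> Fn n \<and> box n Y w \<in> G)"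
  using bw unfolding b_witness_def by blast

lemma b_NN:
  assumes pos: "prob (NN n) > 0" and D: "D \<in> sets (F n)" and A: "A \<in> sets (seqspace E)"
  shows "prob (D \<inter> NN n \<inter> (box n Y -` A \<inter> space M)) = prob (D \<inter> Fn n) * LL (A \<inter> G)"
proof -
  have DFn: "D \<inter> Fn n \<in> sets (F n)" using D bwF[OF pos] by (rule sets.Int)
  have AG: "A \<inter> G \<in> sets (seqspace E)" using A bwG by (rule sets.Int)
  have "AE w in M. (w \<in> D \<inter> NN n \<inter> (box n Y -` A \<inter> space M) \<longleftrightarrow> w \<in> D \<inter> Fn n \<inter> (box n Y -` (A \<inter> G) \<inter> space M))"
    using AE_space bwAE[OF pos] by eventually_elim auto
  then have "prob (D \<inter> NN n \<inter> (box n Y -` A \<inter> space M)) = prob (D \<inter> Fn n \<inter> (box n Y -` (A \<inter> G) \<inter> space M))"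
  proof (rule measure_eq_AE)
    show "D \<inter> NN n \<inter> (box n Y -` A \<inter> space M) \<in> events"
      by (rule sets.Int[OF sets.Int[OF F_sets_M[OF D] NN_sets] box_pre_sets[OF A]])
    show "D \<inter> Fn n \<inter> (box n Y -` (A \<inter> G) \<inter> space M) \<in> events"
      by (rule sets.Int[OF F_sets_M[OF DFn] box_pre_sets[OF AG]])
  qed
  also have "\<dots> = prob (D \<inter> Fn n) * LL (A \<inter> G)"
    by (rule fut_meas[OF DFn AG])
  finally show ?thesis .
qed

lemma b_NN1:
  assumes pos: "prob (NN n) > 0" and D: "D \<in> sets (F n)"
  shows "prob (D \<inter> NN n) = prob (D \<inter> Fn n) * LL G"
proof -
  have "prob (D \<inter> NN n) = prob (D \<inter> NN n \<inter> (box n Y -` space (seqspace E) \<inter> space M))"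
    unfolding box_pre_space using NN_sets by (simp add: Int_absorb2 Int_assoc)
  also have "\<dots> = prob (D \<inter> Fn n) * LL (space (seqspace E) \<inter> G)"
    by (rule b_NN[OF pos D sets.top])
  also have "space (seqspace E) \<inter> G = G" using sets.sets_into_space[OF bwG] by blast
  finally show ?thesis .
qed

lemma LG_pos: "LL G > 0"
proof -
  obtain n where pos: "prob (NN n) > 0" using fin_NN_ex by blast
  have sp: "space M \<in> sets (F n)" using sets.top[of "F n"] spF by simp
  have "prob (space M \<inter> NN n) = prob (space M \<inter> Fn n) * LL G" by (rule b_NN1[OF pos sp])
  then have "prob (NN n) = prob (space M \<inter> Fn n) * LL G" by (simp add: Int_absorb1)
  then have "LL G \<noteq> 0" using pos by auto
  then show ?thesis using LL_nonneg[of G] by linarith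
qed

lemma b_key:
  assumes X: "X \<in> FR' M F R" and A: "A \<in> sets (seqspace E)"
  shows "prob (X \<inter> (boxR R Y -` A \<inter> fin)) * LL G = prob X * LL (A \<inter> G)"
proof -
  note Xc = FR'_char[OF X]
  have S1: "X \<inter> (boxR R Y -` A \<inter> fin) \<in> sets M" by (rule sets.Int[OF conjunct1[OF Xc] boxR_pre(2)[OF A]])
  have S1f: "X \<inter> (boxR R Y -` A \<inter> fin) \<subseteq> fin" by auto
  have trm: "prob (X \<inter> (boxR R Y -` A \<inter> fin) \<inter> NN n) * LL G = prob (X \<inter> NN n) * LL (A \<inter> G)" for n
  proof -
    have e1: "X \<inter> (boxR R Y -` A \<inter> fin) \<inter> NN n = X \<inter> NN n \<inter> (box n Y -` A \<inter> space M)"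
      by (rule boxR_NN[OF conjunct1[OF conjunct2[OF Xc]]])
    have XN: "X \<inter> NN n \<in> sets M" by (rule sets.Int[OF conjunct1[OF Xc] NN_sets])
    have XNB: "X \<inter> NN n \<inter> (box n Y -` A \<inter> space M) \<in> sets M"
      by (rule sets.Int[OF XN box_pre_sets[OF A]])
    show ?thesis
    proof (cases "prob (NN n) > 0")
      case True
      have "\<exists>D\<in>sets (F n). X \<inter> NN n = D \<inter> NN n" using conjunct2[OF conjunct2[OF Xc]] by (rule spec)
      then obtain D where D: "D \<in> sets (F n)" "X \<inter> NN n = D \<inter> NN n" by (elim bexE)
      have "prob (X \<inter> (boxR R Y -` A \<inter> fin) \<inter> NN n) * LL G = prob (D \<inter> Fn n) * LL (A \<inter> G) * LL G"
        unfolding e1 D(2) b_NN[OF True D(1) A] ..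
      also have "\<dots> = prob (X \<inter> NN n) * LL (A \<inter> G)"
        unfolding D(2) b_NN1[OF True D(1)] by simp
      finally show ?thesis .
    next
      case False
      then have z: "prob (NN n) = 0" using measure_nonneg[of M "NN n"] by linarith
      have "prob (X \<inter> NN n) \<le> prob (NN n)" using XN NN_sets by (intro finite_measure_mono) auto
      then have z1: "prob (X \<inter> NN n) = 0" using z measure_nonneg[of M "X \<inter> NN n"] by linarith
      have "prob (X \<inter> NN n \<inter> (box n Y -` A \<inter> space M)) \<le> prob (NN n)"
        using XNB NN_sets by (intro finite_measure_mono) auto
      then have z2: "prob (X \<inter> NN n \<inter> (box n Y -` A \<inter> space M)) = 0"
        using z measure_nonneg[of M "X \<inter> NN n \<inter> (box n Y -` A \<inter> space M)"] by linarith
      show ?thesis unfolding e1 z1 z2 by simp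
    qed
  qed
  have s1: "(\<lambda>n. prob (X \<inter> (boxR R Y -` A \<inter> fin) \<inter> NN n) * LL G) sums (prob (X \<inter> (boxR R Y -` A \<inter> fin)) * LL G)"
    by (rule sums_mult2[OF sum_NN[OF S1 S1f]])
  have s2: "(\<lambda>n. prob (X \<inter> NN n) * LL (A \<inter> G)) sums (prob X * LL (A \<inter> G))"
    using Xc by (intro sums_mult2 sum_NN) auto
  show ?thesis using s1 s2 unfolding trm by (rule sums_unique2)
qed

lemma b_key_fin:
  assumes A: "A \<in> sets (seqspace E)"
  shows "prob (boxR R Y -` A \<inter> fin) = prob fin * LL (A \<inter> G) / LL G"
proof -
  have "prob (fin \<inter> (boxR R Y -` A \<inter> fin)) * LL G = prob fin * LL (A \<inter> G)"
    by (rule b_key[OF fin_FR' A])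
  moreover have "fin \<inter> (boxR R Y -` A \<inter> fin) = boxR R Y -` A \<inter> fin" by blast
  ultimately show ?thesis using LG_pos by (simp add: field_simps)
qed

lemma b_imp_a: "stmt_a M F E Y R"
  unfolding stmt_a_def
proof -
  interpret P': prob_space "condP M R" by (rule prob_space_condP)
  show "P'.indep_set (FR' M F R) (sigma_boxR M E R Y)"
  proof (rule P'.indep_setI)
    show "FR' M F R \<subseteq> P'.events"
    proof
      fix x assume "x \<in> FR' M F R"
      then show "x \<in> P'.events" using FR'_char[of x] sets_condP_iff[of x] by simp
    qed
    show "sigma_boxR M E R Y \<subseteq> P'.events"
    proof
      fix x assume "x \<in> sigma_boxR M E R Y"
      then obtain A where A: "A \<in> sets (seqspace E)" and xA: "x = boxR R Y -` A \<inter> fin"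
        unfolding sigma_boxR_def by (simp only: mem_Collect_eq) (elim exE conjE, assumption)
      show "x \<in> P'.events" unfolding xA sets_condP_iff using boxR_pre(2)[OF A] by simp
    qed
  next
    fix a b assume a: "a \<in> FR' M F R" and b: "b \<in> sigma_boxR M E R Y"
    from b obtain A where A: "A \<in> sets (seqspace E)" and bA: "b = boxR R Y -` A \<inter> fin"
      unfolding sigma_boxR_def by (simp only: mem_Collect_eq) (elim exE conjE, assumption)
    note ac = FR'_char[OF a]
    have bs: "b \<in> sets M" "b \<subseteq> fin" using boxR_pre(2)[OF A] bA by auto
    have abs: "a \<inter> b \<in> sets M" "a \<inter> b \<subseteq> fin" using ac bs by auto
    have k1: "prob (a \<inter> b) * LL G = prob a * LL (A \<inter> G)" unfolding bA by (rule b_key[OF a A])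
    have k2: "prob b = prob fin * LL (A \<inter> G) / LL G" unfolding bA by (rule b_key_fin[OF A])
    have k1': "prob (a \<inter> b) = prob a * LL (A \<inter> G) / LL G" using k1 LG_pos by (simp add: field_simps)
    show "P'.prob (a \<inter> b) = P'.prob a * P'.prob b"
      unfolding measure_condP[OF abs] measure_condP[OF bs] measure_condP[OF conjunct1[OF ac] conjunct1[OF conjunct2[OF ac]]]
      unfolding k1' k2 using p_pos LG_pos by (simp add: field_simps)
  qed
qed

lemma measure_distr_condP:
  assumes A: "A \<in> sets (seqspace E)"
  shows "measure (distr (condP M R) (seqspace E) (boxR R Y)) A = LL (A \<inter> G) / LL G"
proof -
  have "measure (distr (condP M R) (seqspace E) (boxR R Y)) A = measure (condP M R) (boxR R Y -` A \<inter> fin)"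
    using measure_distr[OF boxR_meas_condP A] space_condP by simp
  also have "\<dots> = prob (boxR R Y -` A \<inter> fin) / prob fin"
    using boxR_pre(2)[OF A] by (intro measure_condP) auto
  also have "\<dots> = LL (A \<inter> G) / LL G" unfolding b_key_fin[OF A] using p_pos by simp
  finally show ?thesis .
qed

lemma b_law: "distr (condP M R) (seqspace E) (boxR R Y) = uniform_measure (law M E Y) G"
proof (rule measure_eqI)
  show "sets (distr (condP M R) (seqspace E) (boxR R Y)) = sets (uniform_measure (law M E Y) G)"
    using law_sets by simp
next
  fix A assume "A \<in> sets (distr (condP M R) (seqspace E) (boxR R Y))"
  then have A: "A \<in> sets (seqspace E)" by simp
  have AG: "A \<inter> G \<in> sets (seqspace E)" using A bwG by (rule sets.Int)
  interpret P': prob_space "condP M R" by (rule prob_space_condP)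
  interpret D: finite_measure "distr (condP M R) (seqspace E) (boxR R Y)"
    by (rule P'.finite_measure_distr[OF boxR_meas_condP])
  have "emeasure (distr (condP M R) (seqspace E) (boxR R Y)) A = ennreal (LL (A \<inter> G) / LL G)"
    using measure_distr_condP[OF A] A by (simp add: D.emeasure_eq_measure)
  also have "\<dots> = ennreal (LL (G \<inter> A)) / ennreal (LL G)"
    using LG_pos by (simp add: divide_ennreal Int_commute)
  also have "\<dots> = emeasure (uniform_measure (law M E Y) G) A"
    using A AG bwG law_sets by (simp add: emeasure_law Int_commute)
  finally show "emeasure (distr (condP M R) (seqspace E) (boxR R Y)) A = emeasure (uniform_measure (law M E Y) G) A" .
qed

end

lemma compl_Pow: "H \<subseteq> sets M \<Longrightarrow> H \<union> null_sets M \<subseteq> Pow (space M)"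
  using sets.sets_into_space by auto

lemma compl_sa: "H \<subseteq> sets M \<Longrightarrow> sigma_algebra (space M) (compl_sets M H)"
  unfolding compl_sets_def by (rule sigma_algebra_sigma_sets[OF compl_Pow])

lemma compl_AE:
  assumes H: "H \<subseteq> sets M" and A: "A \<in> compl_sets M H"
  shows "\<exists>B\<in>sigma_sets (space M) H. AE w in M. (w \<in> A \<longleftrightarrow> w \<in> B)"
  using A unfolding compl_sets_def
proof (induction rule: sigma_sets.induct)
  case (Basic a)
  show ?case
  proof (cases "a \<in> H")
    case True
    have "AE w in M. (w \<in> a \<longleftrightarrow> w \<in> a)" by simp
    then show ?thesis using True by (intro bexI[where x=a]) auto
  next
    case False
    then have "a \<in> null_sets M" using Basic by simp
    then have "AE w in M. w \<notin> a" by (rule AE_not_in)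
    then have "AE w in M. (w \<in> a \<longleftrightarrow> w \<in> {})" by simp
    then show ?thesis by (intro bexI[where x="{}"]) (auto intro: sigma_sets.Empty)
  qed
next
  case Empty
  have "AE w in M. (w \<in> {} \<longleftrightarrow> w \<in> {})" by simp
  then show ?case by (intro bexI[where x="{}"]) (auto intro: sigma_sets.Empty)
next
  case (Compl a)
  from Compl.IH obtain B where B: "B \<in> sigma_sets (space M) H" "AE w in M. (w \<in> a \<longleftrightarrow> w \<in> B)"
    by (elim bexE)
  have "AE w in M. (w \<in> space M - a \<longleftrightarrow> w \<in> space M - B)"
    using AE_space B(2) by eventually_elim auto
  moreover have "space M - B \<in> sigma_sets (space M) H" using B(1) by (rule sigma_sets.Compl)
  ultimately show ?case by (intro bexI[where x="space M - B"])
next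
  case (Union A)
  have "\<forall>i. \<exists>B. B \<in> sigma_sets (space M) H \<and> (AE w in M. (w \<in> A i \<longleftrightarrow> w \<in> B))"
    using Union.IH by (simp add: Bex_def)
  from choice[OF this] obtain B where B': "\<forall>i. B i \<in> sigma_sets (space M) H \<and> (AE w in M. (w \<in> A i \<longleftrightarrow> w \<in> B i))"
    by (elim exE)
  have B1: "\<And>i. B i \<in> sigma_sets (space M) H" and B2: "\<And>i. AE w in M. (w \<in> A i \<longleftrightarrow> w \<in> B i)"
    using B' by simp_all
  have "AE w in M. \<forall>i. (w \<in> A i \<longleftrightarrow> w \<in> B i)" unfolding AE_all_countable using B2 by simp
  then have "AE w in M. (w \<in> (\<Union>i. A i) \<longleftrightarrow> w \<in> (\<Union>i. B i))" by eventually_elim auto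
  moreover have "(\<Union>i. B i) \<in> sigma_sets (space M) H" using B1 by (rule sigma_sets.Union)
  ultimately show ?case by (intro bexI[where x="\<Union>i. B i"])
qed

lemma AE_compl:
  assumes H: "H \<subseteq> sets M" and B: "B \<in> H" and N: "N \<in> sets M"
    and ae: "AE w in M. (w \<in> N \<longleftrightarrow> w \<in> B)"
  shows "N \<in> compl_sets M H"
proof -
  interpret S: sigma_algebra "space M" "compl_sets M H" by (rule compl_sa[OF H])
  have BM: "B \<in> sets M" using H B by auto
  have "AE x in M. x \<notin> B - N" using ae by eventually_elim auto
  then have n1: "B - N \<in> null_sets M" using BM N by (subst AE_iff_null_sets) auto
  have "AE x in M. x \<notin> N - B" using ae by eventually_elim auto
  then have n2: "N - B \<in> null_sets M" using BM N by (subst AE_iff_null_sets) auto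
  have g: "X \<in> H \<union> null_sets M \<Longrightarrow> X \<in> compl_sets M H" for X
    unfolding compl_sets_def by (rule sigma_sets.Basic)
  have "N = (B - (B - N)) \<union> (N - B)" by blast
  moreover have "(B - (B - N)) \<union> (N - B) \<in> compl_sets M H"
    using S.Un[OF S.Diff[OF g[of B] g[of "B - N"]] g[of "N - B"]] B n1 n2 by simp
  ultimately show ?thesis by simp
qed

lemma sigma_sets_F: "sigma_sets (space M) (sets (F n)) = sets (F n)"
  using sets.sigma_sets_eq[of "F n"] spF by simp

lemma NN_compl_from_ii:
  assumes ii: "stmt_ii M F R"
  shows "NN n \<in> compl_sets M (sets (F n))"
proof (cases n)
  case 0
  have "NN n = {w \<in> space M. R w \<le> enat 0}" using 0 by (auto simp: zero_enat_def[symmetric])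
  then show ?thesis using ii unfolding stmt_ii_def using 0 by simp
next
  case (Suc m)
  have sub: "compl_sets M (sets (F m)) \<subseteq> compl_sets M (sets (F n))"
    unfolding compl_sets_def using monoF[of m n] Suc by (intro sigma_sets_subseteq) auto
  interpret S: sigma_algebra "space M" "compl_sets M (sets (F n))" by (rule compl_sa[OF subF])
  have "NN n = {w \<in> space M. R w \<le> enat n} - {w \<in> space M. R w \<le> enat m}"
  proof (intro set_eqI)
    fix w show "w \<in> NN n \<longleftrightarrow> w \<in> {w \<in> space M. R w \<le> enat n} - {w \<in> space M. R w \<le> enat m}"
      using Suc by (cases "R w") auto
  qed
  moreover have h1: "{w \<in> space M. R w \<le> enat n} \<in> compl_sets M (sets (F n))" using ii unfolding stmt_ii_def by simp
  moreover have h2: "{w \<in> space M. R w \<le> enat m} \<in> compl_sets M (sets (F n))" using ii sub unfolding stmt_ii_def by auto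
  ultimately show ?thesis using S.Diff[OF h1 h2] by simp
qed

lemma ii_imp_b: "stmt_ii M F R \<Longrightarrow> \<exists>Fn. b_witness M F E Y R (space (seqspace E)) Fn"
proof -
  assume ii: "stmt_ii M F R"
  have "\<forall>n. \<exists>B. B \<in> sets (F n) \<and> (AE w in M. (w \<in> NN n \<longleftrightarrow> w \<in> B))"
  proof
    fix n
    from compl_AE[OF subF NN_compl_from_ii[OF ii]]
    show "\<exists>B. B \<in> sets (F n) \<and> (AE w in M. (w \<in> NN n \<longleftrightarrow> w \<in> B))"
      unfolding sigma_sets_F by (simp add: Bex_def)
  qed
  from choice[OF this] obtain Fn where Fn: "\<forall>n. Fn n \<in> sets (F n) \<and> (AE w in M. (w \<in> NN n \<longleftrightarrow> w \<in> Fn n))"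
    by (elim exE)
  have "b_witness M F E Y R (space (seqspace E)) Fn"
    unfolding b_witness_def
  proof (intro conjI allI impI)
    show "space (seqspace E) \<in> sets (seqspace E)" by simp
    fix n assume "0 < prob (NN n)"
    show "Fn n \<in> sets (F n)" using Fn by simp
    have "AE w in M. (w \<in> NN n \<longleftrightarrow> w \<in> Fn n)" using Fn by simp
    then show "AE w in M. (R w = enat n \<longleftrightarrow> w \<in> Fn n \<and> box n Y w \<in> space (seqspace E))"
      using AE_space by eventually_elim (auto simp: box_space)
  qed
  then show ?thesis by blast
qed

lemma prob_space_law: "prob_space (law M E Y)"
  unfolding law_def by (rule prob_space_distr[OF box_meas])

lemma uniform_law_space: "uniform_measure (law M E Y) (space (seqspace E)) = law M E Y"
proof (rule measure_eqI)
  show "sets (uniform_measure (law M E Y) (space (seqspace E))) = sets (law M E Y)" by simp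
  interpret L: prob_space "law M E Y" by (rule prob_space_law)
  fix A assume "A \<in> sets (uniform_measure (law M E Y) (space (seqspace E)))"
  then have A: "A \<in> sets (law M E Y)" by simp
  have sp: "space (seqspace E) = space (law M E Y)" unfolding law_def by simp
  have "space (law M E Y) \<inter> A = A" using sets.sets_into_space[OF A] by blast
  then show "emeasure (uniform_measure (law M E Y) (space (seqspace E))) A = emeasure (law M E Y) A"
    unfolding sp using A L.emeasure_space_1 by (simp add: divide_ennreal_def)
qed

lemma ii_imp_i: "stmt_ii M F R \<Longrightarrow> stmt_i M F E Y R"
proof -
  assume "stmt_ii M F R"
  then obtain Fn where bw: "b_witness M F E Y R (space (seqspace E)) Fn" using ii_imp_b by blast
  show ?thesis unfolding stmt_i_def using b_imp_a[OF bw] b_law[OF bw] uniform_law_space by simp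
qed

lemma zero_lem:
  assumes D: "D \<in> sets (F n)" and A: "A \<in> sets (seqspace E)"
    and ae: "AE w in M. \<not> (w \<in> D \<and> box n Y w \<in> A)"
  shows "prob D * LL A = 0"
proof -
  have "AE w in M. (w \<in> D \<inter> (box n Y -` A \<inter> space M) \<longleftrightarrow> w \<in> {})"
    using ae by eventually_elim auto
  then have "prob (D \<inter> (box n Y -` A \<inter> space M)) = prob {}"
    by (rule measure_eq_AE) (auto intro: sets.Int[OF F_sets_M[OF D] box_pre_sets[OF A]])
  then show ?thesis using fut_meas[OF D A] by simp
qed

lemma prod_zero: "(a::real) * b = 0 \<Longrightarrow> b > 0 \<Longrightarrow> a = 0" by simp

lemma uniq_n:
  assumes bw1: "b_witness M F E Y R G Fn" and bw2: "b_witness M F E Y R G' Fn'"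
    and pos: "prob (NN n) > 0"
  shows "(AE w in M. (w \<in> Fn n \<longleftrightarrow> w \<in> Fn' n))"
    and "LL (G - G') = 0" and "LL (G' - G) = 0"
proof -
  have F1: "Fn n \<in> sets (F n)" by (rule bwF[OF bw1 pos])
  have F2: "Fn' n \<in> sets (F n)" by (rule bwF[OF bw2 pos])
  have G1: "G \<in> sets (seqspace E)" by (rule bwG[OF bw1])
  have G2: "G' \<in> sets (seqspace E)" by (rule bwG[OF bw2])
  have ae: "AE w in M. (w \<in> Fn n \<and> box n Y w \<in> G \<longleftrightarrow> w \<in> Fn' n \<and> box n Y w \<in> G')"
    using bwAE[OF bw1 pos] bwAE[OF bw2 pos] by eventually_elim auto
  have "AE w in M. \<not> (w \<in> Fn n - Fn' n \<and> box n Y w \<in> G)" using ae by eventually_elim auto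
  from zero_lem[OF sets.Diff[OF F1 F2] G1 this] have d1: "prob (Fn n - Fn' n) = 0"
    using LG_pos[OF bw1] by (rule prod_zero)
  have "AE w in M. \<not> (w \<in> Fn' n - Fn n \<and> box n Y w \<in> G')" using ae by eventually_elim auto
  from zero_lem[OF sets.Diff[OF F2 F1] G2 this] have d2: "prob (Fn' n - Fn n) = 0"
    using LG_pos[OF bw2] by (rule prod_zero)
  have m1: "Fn n - Fn' n \<in> sets M" "Fn' n - Fn n \<in> sets M"
    using F_sets_M[OF sets.Diff[OF F1 F2]] F_sets_M[OF sets.Diff[OF F2 F1]] by auto
  have "AE w in M. w \<notin> Fn n - Fn' n"
    using m1(1) d1 by (intro AE_not_in) (simp add: null_sets_def emeasure_eq_measure)
  moreover have "AE w in M. w \<notin> Fn' n - Fn n"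
    using m1(2) d2 by (intro AE_not_in) (simp add: null_sets_def emeasure_eq_measure)
  ultimately show "AE w in M. (w \<in> Fn n \<longleftrightarrow> w \<in> Fn' n)" by eventually_elim auto
  have sp: "space M \<in> sets (F n)" using sets.top[of "F n"] spF by simp
  have "prob (space M \<inter> NN n) = prob (space M \<inter> Fn n) * LL G" by (rule b_NN1[OF bw1 pos sp])
  then have "prob (NN n) = prob (Fn n) * LL G"
    using F_sets_M[OF F1] sets.sets_into_space by (simp add: Int_absorb1)
  then have pF1: "prob (Fn n) \<noteq> 0" using pos by auto
  have F12: "Fn n \<inter> Fn' n \<in> sets (F n)" by (rule sets.Int[OF F1 F2])
  have "prob (Fn n) = prob ((Fn n \<inter> Fn' n) \<union> (Fn n - Fn' n))" by (simp add: Int_Diff_Un)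
  also have "\<dots> = prob (Fn n \<inter> Fn' n) + prob (Fn n - Fn' n)"
    using F_sets_M[OF F12] m1(1) by (intro finite_measure_Union) auto
  finally have "prob (Fn n \<inter> Fn' n) \<noteq> 0" using d1 pF1 by simp
  then have p12: "prob (Fn n \<inter> Fn' n) > 0" using measure_nonneg[of M "Fn n \<inter> Fn' n"] by linarith
  have "AE w in M. \<not> (w \<in> Fn n \<inter> Fn' n \<and> box n Y w \<in> G - G')" using ae by eventually_elim auto
  from zero_lem[OF F12 sets.Diff[OF G1 G2] this] show "LL (G - G') = 0"
    using p12 by simp
  have "AE w in M. \<not> (w \<in> Fn n \<inter> Fn' n \<and> box n Y w \<in> G' - G)" using ae by eventually_elim auto
  from zero_lem[OF F12 sets.Diff[OF G2 G1] this] show "LL (G' - G) = 0"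
    using p12 by simp
qed

lemma uniq:
  assumes bw1: "b_witness M F E Y R G Fn" and bw2: "b_witness M F E Y R G' Fn'"
  shows "emeasure (law M E Y) ((G - G') \<union> (G' - G)) = 0"
    and "\<forall>n. prob (NN n) > 0 \<longrightarrow> (AE w in M. (w \<in> Fn n \<longleftrightarrow> w \<in> Fn' n))"
proof -
  show "\<forall>n. prob (NN n) > 0 \<longrightarrow> (AE w in M. (w \<in> Fn n \<longleftrightarrow> w \<in> Fn' n))"
    using uniq_n(1)[OF bw1 bw2] by blast
  obtain n where pos: "prob (NN n) > 0" using fin_NN_ex by blast
  have G1: "G \<in> sets (seqspace E)" by (rule bwG[OF bw1])
  have G2: "G' \<in> sets (seqspace E)" by (rule bwG[OF bw2])
  have a: "G - G' \<in> sets (law M E Y)" "G' - G \<in> sets (law M E Y)" using G1 G2 law_sets by auto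
  have "emeasure (law M E Y) ((G - G') \<union> (G' - G)) \<le> emeasure (law M E Y) (G - G') + emeasure (law M E Y) (G' - G)"
    by (rule emeasure_subadditive[OF a])
  also have "\<dots> = 0"
    using emeasure_law[of "G - G'"] emeasure_law[of "G' - G"] G1 G2 uniq_n(2,3)[OF bw1 bw2 pos] by simp
  finally show "emeasure (law M E Y) ((G - G') \<union> (G' - G)) = 0" by simp
qed

abbreviation "mu \<equiv> distr (condP M R) (seqspace E) (boxR R Y)"
abbreviation "Pn n \<equiv> restr_to_subalg M (F n)"
abbreviation "LW \<equiv> law M E Y"

lemma sets_Pn: "sets (Pn n) = sets (F n)" by (rule sets_restr_to_subalg[OF subalg])
lemma space_Pn: "space (Pn n) = space M" by (rule space_restr_to_subalg)
lemma space_LW: "space LW = space (seqspace E)" unfolding law_def by simp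

lemma prob_Pn: "prob_space (Pn n)" by (rule prob_space_restr_to_subalg[OF subalg prob_space_axioms])

lemma id_meas_Pn: "(\<lambda>w. w) \<in> measurable M (Pn n)"
proof (rule measurableI)
  fix x assume "x \<in> space M" then show "x \<in> space (Pn n)" by (simp add: space_Pn)
next
  fix A assume "A \<in> sets (Pn n)"
  then have "A \<in> sets (F n)" by (simp add: sets_Pn)
  then have "A \<in> sets M" by (rule F_sets_M)
  then show "(\<lambda>w. w) -` A \<inter> space M \<in> sets M" by simp
qed

lemma box_meas_LW: "box n Y \<in> measurable M LW"
  using box_meas by (simp add: measurable_cong_sets[OF refl law_sets])

lemma phi_meas: "(\<lambda>w. (w, box n Y w)) \<in> measurable M (Pn n \<Otimes>\<^sub>M LW)"
  by (rule measurable_Pair[OF id_meas_Pn box_meas_LW])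

lemma phi_space: "w \<in> space M \<Longrightarrow> (w, box n Y w) \<in> space (Pn n \<Otimes>\<^sub>M LW)"
  using measurable_space[OF phi_meas] by blast

lemma a_step1:
  assumes a: "stmt_a M F E Y R" and D: "D \<in> sets (F n)" and A: "A \<in> sets (seqspace E)"
  shows "prob (D \<inter> NN n \<inter> (box n Y -` A \<inter> space M)) = prob (D \<inter> NN n) * measure mu A"
proof -
  interpret P': prob_space "condP M R" by (rule prob_space_condP)
  have ind: "P'.indep_set (FR' M F R) (sigma_boxR M E R Y)" using a unfolding stmt_a_def .
  let ?X = "D \<inter> NN n" and ?S = "boxR R Y -` A \<inter> fin"
  have Xin: "?X \<in> FR' M F R" by (rule FR'_gen[OF D])
  have Sin: "?S \<in> sigma_boxR M E R Y"
    unfolding sigma_boxR_def by (rule CollectI, rule exI[of _ A]) (simp add: A)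
  have i: "P'.prob (?X \<inter> ?S) = P'.prob ?X * P'.prob ?S" by (rule P'.indep_setD[OF ind Xin Sin])
  have XS: "?X \<inter> ?S = D \<inter> NN n \<inter> (box n Y -` A \<inter> space M)"
  proof (rule set_eqI)
    fix w show "w \<in> ?X \<inter> ?S \<longleftrightarrow> w \<in> D \<inter> NN n \<inter> (box n Y -` A \<inter> space M)"
      unfolding boxR_def fin_set_def by (cases "R w") auto
  qed
  have Xs: "?X \<in> sets M" "?X \<subseteq> fin" using sets.Int[OF F_sets_M[OF D] NN_sets] NN_sub_fin by auto
  have Ss: "?S \<in> sets M" "?S \<subseteq> fin" using boxR_pre(2)[OF A] by auto
  have XSs: "?X \<inter> ?S \<in> sets M" "?X \<inter> ?S \<subseteq> fin" using Xs Ss by auto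
  have muA: "measure mu A = prob ?S / prob fin"
    using measure_distr[OF boxR_meas_condP A] measure_condP[OF Ss] by (simp add: space_condP)
  have "prob (?X \<inter> ?S) / prob fin = prob ?X / prob fin * (prob ?S / prob fin)"
    using i unfolding measure_condP[OF Xs] measure_condP[OF Ss] measure_condP[OF XSs] .
  then have "prob (?X \<inter> ?S) = prob ?X * (prob ?S / prob fin)" using p_pos by (simp add: field_simps)
  then show ?thesis unfolding XS muA .
qed

lemma a_step2:
  assumes B: "B \<in> sigma_sets (space M) (sets (F n) \<union> sigma_box M E n Y)"
  shows "\<exists>S\<in>sets (Pn n \<Otimes>\<^sub>M LW). B = (\<lambda>w. (w, box n Y w)) -` S \<inter> space M"
  using B
proof (induction rule: sigma_sets.induct)
  case (Basic b)
  show ?case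
  proof (cases "b \<in> sets (F n)")
    case True
    have bs: "b \<subseteq> space M" using sets.sets_into_space[OF True] spF by simp
    have "b \<times> space LW \<in> sets (Pn n \<Otimes>\<^sub>M LW)" using True by (intro pair_measureI) (auto simp: sets_Pn)
    moreover have "b = (\<lambda>w. (w, box n Y w)) -` (b \<times> space LW) \<inter> space M"
      using bs box_space by (auto simp: space_LW)
    ultimately show ?thesis by (rule bexI[rotated])
  next
    case False
    then have "b \<in> sigma_box M E n Y" using Basic by simp
    then obtain A where A: "A \<in> sets (seqspace E)" and bA: "b = box n Y -` A \<inter> space M"
      unfolding sigma_box_def by (simp only: mem_Collect_eq) (elim exE conjE, assumption)
    have "space (Pn n) \<times> A \<in> sets (Pn n \<Otimes>\<^sub>M LW)" using A by (intro pair_measureI) (auto simp: law_sets)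
    moreover have "b = (\<lambda>w. (w, box n Y w)) -` (space (Pn n) \<times> A) \<inter> space M"
      unfolding bA by (auto simp: space_Pn)
    ultimately show ?thesis by (rule bexI[rotated])
  qed
next
  case Empty
  show ?case by (rule bexI[where x="{}"]) auto
next
  case (Compl a)
  from Compl.IH obtain S where S: "S \<in> sets (Pn n \<Otimes>\<^sub>M LW)" "a = (\<lambda>w. (w, box n Y w)) -` S \<inter> space M"
    by (elim bexE)
  have "space (Pn n \<Otimes>\<^sub>M LW) - S \<in> sets (Pn n \<Otimes>\<^sub>M LW)" using S(1) by (rule sets.compl_sets)
  moreover have "space M - a = (\<lambda>w. (w, box n Y w)) -` (space (Pn n \<Otimes>\<^sub>M LW) - S) \<inter> space M"
    unfolding S(2) using phi_space by blast
  ultimately show ?case by (rule bexI[rotated])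
next
  case (Union A)
  have "\<forall>i. \<exists>S. S \<in> sets (Pn n \<Otimes>\<^sub>M LW) \<and> A i = (\<lambda>w. (w, box n Y w)) -` S \<inter> space M"
    using Union.IH by (simp add: Bex_def)
  from choice[OF this] obtain S where S': "\<forall>i. S i \<in> sets (Pn n \<Otimes>\<^sub>M LW) \<and> A i = (\<lambda>w. (w, box n Y w)) -` S i \<inter> space M"
    by (elim exE)
  have S1: "\<And>i. S i \<in> sets (Pn n \<Otimes>\<^sub>M LW)" and S2: "\<And>i. A i = (\<lambda>w. (w, box n Y w)) -` S i \<inter> space M"
    using S' by simp_all
  have "(\<Union>i. S i) \<in> sets (Pn n \<Otimes>\<^sub>M LW)" using S1 by (intro sets.countable_UN'') simp_all
  moreover have "(\<Union>i. A i) = (\<lambda>w. (w, box n Y w)) -` (\<Union>i. S i) \<inter> space M"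
    unfolding S2 by blast
  ultimately show ?case by (rule bexI[rotated])
qed

lemma a_step3: "distr M (Pn n \<Otimes>\<^sub>M LW) (\<lambda>w. (w, box n Y w)) = Pn n \<Otimes>\<^sub>M LW"
proof (rule pair_measure_eqI[symmetric])
  show "sigma_finite_measure (Pn n)" by (rule prob_space_imp_sigma_finite[OF prob_Pn])
  show "sigma_finite_measure LW" by (rule prob_space_imp_sigma_finite[OF prob_space_law])
  show "sets (Pn n \<Otimes>\<^sub>M LW) = sets (distr M (Pn n \<Otimes>\<^sub>M LW) (\<lambda>w. (w, box n Y w)))" by simp
  fix D A assume D: "D \<in> sets (Pn n)" and A: "A \<in> sets LW"
  have D': "D \<in> sets (F n)" using D by (simp add: sets_Pn)
  have A': "A \<in> sets (seqspace E)" using A by (simp add: law_sets)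
  have DA: "D \<times> A \<in> sets (Pn n \<Otimes>\<^sub>M LW)" using D A by (rule pair_measureI)
  have pre: "(\<lambda>w. (w, box n Y w)) -` (D \<times> A) \<inter> space M = D \<inter> (box n Y -` A \<inter> space M)" by auto
  have "emeasure (distr M (Pn n \<Otimes>\<^sub>M LW) (\<lambda>w. (w, box n Y w))) (D \<times> A) = emeasure M (D \<inter> (box n Y -` A \<inter> space M))"
    using emeasure_distr[OF phi_meas DA] pre by simp
  also have "\<dots> = ennreal (prob D * LL A)"
    using fut_meas[OF D' A'] by (simp add: emeasure_eq_measure)
  also have "\<dots> = emeasure (Pn n) D * emeasure LW A"
    using emeasure_restr_to_subalg[OF subalg D'] emeasure_law[OF A']
    by (simp add: emeasure_eq_measure ennreal_mult)
  finally show "emeasure (Pn n) D * emeasure LW A = emeasure (distr M (Pn n \<Otimes>\<^sub>M LW) (\<lambda>w. (w, box n Y w))) (D \<times> A)" by simp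
qed

lemma prob_mu: "prob_space mu"
proof -
  interpret P': prob_space "condP M R" by (rule prob_space_condP)
  show ?thesis by (rule P'.prob_space_distr[OF boxR_meas_condP])
qed

lemma sets_mu: "sets mu = sets LW" by (simp add: law_sets)

lemma mu_ac: "absolutely_continuous LW mu"
  unfolding absolutely_continuous_def
proof
  fix A assume A: "A \<in> null_sets LW"
  then have As: "A \<in> sets (seqspace E)" and A0: "emeasure LW A = 0" by (auto simp: law_sets)
  have LA: "LL A = 0" using A0 emeasure_law[OF As] by simp
  have nk: "emeasure M (box k Y -` A \<inter> space M) = 0" for k
  proof -
    have sp: "space M \<in> sets (F k)" using sets.top[of "F k"] spF by simp
    have "prob (space M \<inter> (box k Y -` A \<inter> space M)) = prob (space M) * LL A" by (rule fut_meas[OF sp As])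
    then show ?thesis using LA by (simp add: emeasure_eq_measure Int_absorb1)
  qed
  have U: "(\<Union>k. box k Y -` A \<inter> space M) \<in> sets M"
    by (rule sets.countable_UN'') (simp_all add: box_pre_sets[OF As])
  have sub: "boxR R Y -` A \<inter> fin \<subseteq> (\<Union>k. box k Y -` A \<inter> space M)"
    unfolding boxR_pre(1)[OF As] by blast
  have "emeasure M (boxR R Y -` A \<inter> fin) \<le> emeasure M (\<Union>k. box k Y -` A \<inter> space M)"
    by (rule emeasure_mono[OF sub U])
  also have "\<dots> \<le> (\<Sum>k. emeasure M (box k Y -` A \<inter> space M))"
    using box_pre_sets[OF As] by (intro emeasure_subadditive_countably) auto
  also have "\<dots> = 0" using nk by simp
  finally have z: "emeasure M (boxR R Y -` A \<inter> fin) = 0" by simp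
  have "emeasure mu A = emeasure (condP M R) (boxR R Y -` A \<inter> fin)"
    using emeasure_distr[OF boxR_meas_condP As] by (simp add: space_condP)
  also have "\<dots> = 0" using emeasure_condP[of "boxR R Y -` A \<inter> fin"] boxR_pre(2)[OF As] z by simp
  finally show "A \<in> null_sets mu" using As by (simp add: null_sets_def)
qed

lemma sf_LW: "sigma_finite_measure LW" by (rule prob_space_imp_sigma_finite[OF prob_space_law])

lemma dens_mu: "density LW (RN_deriv LW mu) = mu"
  by (rule sigma_finite_measure.density_RN_deriv[OF sf_LW mu_ac sets_mu])

abbreviation "G0 \<equiv> {y \<in> space LW. RN_deriv LW mu y \<noteq> 0}"

lemma G0_sets: "G0 \<in> sets (seqspace E)"
proof -
  have "G0 \<in> sets LW" by measurable
  then show ?thesis by (simp add: law_sets)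
qed

lemma a_imp_b_n:
  assumes a: "stmt_a M F E Y R" and H: "NN n \<in> compl_sets M (sets (F n) \<union> sigma_box M E n Y)"
  shows "\<exists>F0\<in>sets (F n). AE w in M. (R w = enat n \<longleftrightarrow> w \<in> F0 \<and> box n Y w \<in> G0)"
proof -
  let ?Q = "Pn n \<Otimes>\<^sub>M LW"
  let ?phi = "\<lambda>w. (w, box n Y w)"
  have Hsub: "sets (F n) \<union> sigma_box M E n Y \<subseteq> sets M"
    unfolding sigma_box_def using subF box_pre_sets by auto
  obtain B where B: "B \<in> sigma_sets (space M) (sets (F n) \<union> sigma_box M E n Y)"
    and aeB: "AE w in M. (w \<in> NN n \<longleftrightarrow> w \<in> B)"
    using compl_AE[OF Hsub H] by (elim bexE)
  obtain S where S: "S \<in> sets ?Q" and BS: "B = ?phi -` S \<inter> space M"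
    using a_step2[OF B] by (elim bexE)
  have distrQ: "distr M ?Q ?phi = ?Q" by (rule a_step3)
  define nu1 where "nu1 = distr (density M (indicator (NN n))) (Pn n) (\<lambda>x. x)"
  have idm: "(\<lambda>x. x) \<in> measurable (density M (indicator (NN n))) (Pn n)"
    using id_meas_Pn by (simp add: measurable_cong_sets[OF sets_density refl])
  have sets_nu1: "sets nu1 = sets (Pn n)" unfolding nu1_def by simp
  have em_nu1: "emeasure nu1 D = emeasure M (NN n \<inter> D)" if D: "D \<in> sets (Pn n)" for D
  proof -
    have DM: "D \<in> sets M" using D by (simp add: sets_Pn F_sets_M)
    have "(\<lambda>x. x) -` D \<inter> space (density M (indicator (NN n))) = D"
      using sets.sets_into_space[OF DM] by auto
    then show ?thesis unfolding nu1_def using emeasure_distr[OF idm D] emeasure_restricted[OF NN_sets DM] by simp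
  qed
  have fin_nu1: "finite_measure nu1"
  proof -
    interpret fD: finite_measure "density M (indicator (NN n))" by (rule finite_measure_restricted[OF NN_sets])
    show ?thesis unfolding nu1_def by (rule fD.finite_measure_distr[OF idm])
  qed
  have sf_nu1: "sigma_finite_measure nu1" using fin_nu1 by (rule finite_measure.axioms(1))
  have sf_Pn: "sigma_finite_measure (Pn n)" by (rule prob_space_imp_sigma_finite[OF prob_Pn])
  have sf_mu: "sigma_finite_measure mu" by (rule prob_space_imp_sigma_finite[OF prob_mu])
  have ac1: "absolutely_continuous (Pn n) nu1"
    unfolding absolutely_continuous_def
  proof
    fix D assume D: "D \<in> null_sets (Pn n)"
    then have Ds: "D \<in> sets (Pn n)" and "emeasure (Pn n) D = 0" by auto
    then have "emeasure M D = 0" using emeasure_restr_to_subalg[OF subalg] by (simp add: sets_Pn)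
    moreover have "emeasure M (NN n \<inter> D) \<le> emeasure M D"
      using Ds by (intro emeasure_mono) (auto simp: sets_Pn F_sets_M)
    ultimately have "emeasure nu1 D = 0" using em_nu1[OF Ds] by simp
    then show "D \<in> null_sets nu1" using Ds sets_nu1 by (simp add: null_sets_def)
  qed
  define aa where "aa = RN_deriv (Pn n) nu1"
  define mm where "mm = RN_deriv LW mu"
  have dens1: "density (Pn n) aa = nu1"
    unfolding aa_def by (rule sigma_finite_measure.density_RN_deriv[OF sf_Pn ac1 sets_nu1])
  have dens2: "density LW mm = mu" unfolding mm_def by (rule dens_mu)
  have Sp: "S \<subseteq> space ?Q" using sets.sets_into_space[OF S] .
  have key: "nu1 \<Otimes>\<^sub>M mu = density ?Q (indicator S)"
  proof (rule pair_measure_eqI[OF sf_nu1 sf_mu])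
    show "sets (nu1 \<Otimes>\<^sub>M mu) = sets (density ?Q (indicator S))"
      using sets_pair_measure_cong[OF sets_nu1 sets_mu] by simp
    fix D A assume D: "D \<in> sets nu1" and A: "A \<in> sets mu"
    have D': "D \<in> sets (F n)" using D sets_nu1 sets_Pn by simp
    have A': "A \<in> sets (seqspace E)" using A by simp
    have DA: "D \<times> A \<in> sets ?Q" using D A sets_nu1 sets_mu by (intro pair_measureI) auto
    have SDA: "S \<inter> (D \<times> A) \<in> sets ?Q" using S DA by (rule sets.Int)
    have pre: "?phi -` (S \<inter> (D \<times> A)) \<inter> space M = B \<inter> D \<inter> (box n Y -` A \<inter> space M)"
      unfolding BS by auto
    have s1: "B \<inter> D \<inter> (box n Y -` A \<inter> space M) \<in> sets M"
      using pre measurable_sets[OF phi_meas SDA] by simp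
    have s2: "D \<inter> NN n \<inter> (box n Y -` A \<inter> space M) \<in> sets M"
      by (rule sets.Int[OF sets.Int[OF F_sets_M[OF D'] NN_sets] box_pre_sets[OF A']])
    have aeq: "AE w in M. (w \<in> B \<inter> D \<inter> (box n Y -` A \<inter> space M) \<longleftrightarrow> w \<in> D \<inter> NN n \<inter> (box n Y -` A \<inter> space M))"
      using aeB by eventually_elim auto
    have "emeasure (density ?Q (indicator S)) (D \<times> A) = emeasure ?Q (S \<inter> (D \<times> A))"
      by (rule emeasure_restricted[OF S DA])
    also have "\<dots> = emeasure (distr M ?Q ?phi) (S \<inter> (D \<times> A))" unfolding distrQ ..
    also have "\<dots> = emeasure M (B \<inter> D \<inter> (box n Y -` A \<inter> space M))"
      using emeasure_distr[OF phi_meas SDA] pre by simp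
    also have "\<dots> = emeasure M (D \<inter> NN n \<inter> (box n Y -` A \<inter> space M))"
      by (rule emeasure_eq_AE[OF aeq s1 s2])
    also have "\<dots> = ennreal (prob (D \<inter> NN n) * measure mu A)"
      using a_step1[OF a D' A'] by (simp add: emeasure_eq_measure)
    also have "\<dots> = ennreal (prob (D \<inter> NN n)) * ennreal (measure mu A)"
      by (simp add: ennreal_mult)
    also have "\<dots> = emeasure nu1 D * emeasure mu A"
    proof -
      interpret MU: prob_space mu by (rule prob_mu)
      have "emeasure nu1 D = ennreal (prob (D \<inter> NN n))"
        using em_nu1[OF D[unfolded sets_nu1]] by (simp add: emeasure_eq_measure Int_commute)
      then show ?thesis by (simp add: MU.emeasure_eq_measure)
    qed
    finally show "emeasure nu1 D * emeasure mu A = emeasure (density ?Q (indicator S)) (D \<times> A)" by simp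
  qed
  have am: "aa \<in> borel_measurable (Pn n)" unfolding aa_def by simp
  have mmm: "mm \<in> borel_measurable LW" unfolding mm_def by simp
  have prod: "density (Pn n) aa \<Otimes>\<^sub>M density LW mm = density ?Q (\<lambda>(x, y). aa x * mm y)"
    by (rule pair_measure_density[OF am mmm sf_LW]) (simp add: dens2 sf_mu)
  have eqd: "density ?Q (indicator S) = density ?Q (\<lambda>(x, y). aa x * mm y)"
    using key prod dens1 dens2 by simp
  have sfQ: "sigma_finite_measure ?Q"
    by (rule prob_space_imp_sigma_finite[OF prob_space_pair[OF prob_Pn prob_space_law]])
  have ae1: "AE z in ?Q. indicator S z = (\<lambda>(x, y). aa x * mm y) z"
  proof (rule sigma_finite_measure.density_unique[OF sfQ _ _ eqd])
    show "indicator S \<in> borel_measurable ?Q" using S by simp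
    show "(\<lambda>(x, y). aa x * mm y) \<in> borel_measurable ?Q" using am mmm by measurable
  qed
  define F0 where "F0 = {x \<in> space (Pn n). aa x \<noteq> 0}"
  have F0s: "F0 \<in> sets (Pn n)" unfolding F0_def using am by measurable
  have G0eq: "G0 = {y \<in> space LW. mm y \<noteq> 0}" unfolding mm_def ..
  have G0s: "G0 \<in> sets LW" using G0_sets by (simp add: law_sets)
  have ae2: "AE z in ?Q. (z \<in> S \<longleftrightarrow> z \<in> F0 \<times> G0)"
    using ae1 AE_space
  proof eventually_elim
    case (elim z)
    obtain x y where z: "z = (x, y)" by (cases z)
    have xs: "x \<in> space (Pn n)" and ys: "y \<in> space LW" using elim(2) z by (auto simp: space_pair_measure)
    show ?case
    proof (cases "(x, y) \<in> S")
      case True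
      then have "aa x * mm y = 1" using elim(1) z by simp
      then have "aa x \<noteq> 0" "mm y \<noteq> 0" by auto
      then show ?thesis using True xs ys unfolding z F0_def G0eq by simp
    next
      case False
      then have "aa x * mm y = 0" using elim(1) z by simp
      then have "aa x = 0 \<or> mm y = 0" by simp
      then show ?thesis using False unfolding z F0_def G0eq by auto
    qed
  qed
  have Pmeas: "{z \<in> space ?Q. (z \<in> S \<longleftrightarrow> z \<in> F0 \<times> G0)} \<in> sets ?Q"
  proof -
    have FG: "F0 \<times> G0 \<in> sets ?Q" using F0s G0s by (rule pair_measureI)
    have "{z \<in> space ?Q. (z \<in> S \<longleftrightarrow> z \<in> F0 \<times> G0)} = (S \<inter> (F0 \<times> G0)) \<union> ((space ?Q - S) \<inter> (space ?Q - F0 \<times> G0))"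
      using Sp by auto
    moreover have "(S \<inter> (F0 \<times> G0)) \<union> ((space ?Q - S) \<inter> (space ?Q - F0 \<times> G0)) \<in> sets ?Q"
      using S FG by (intro sets.Un sets.Int sets.compl_sets) 
    ultimately show ?thesis by simp
  qed
  have "AE z in distr M ?Q ?phi. (z \<in> S \<longleftrightarrow> z \<in> F0 \<times> G0)" unfolding distrQ by (rule ae2)
  then have ae3: "AE w in M. (?phi w \<in> S \<longleftrightarrow> ?phi w \<in> F0 \<times> G0)"
    using AE_distr_iff[OF phi_meas Pmeas] by simp
  have "AE w in M. (R w = enat n \<longleftrightarrow> w \<in> F0 \<and> box n Y w \<in> G0)"
    using ae3 aeB AE_space by eventually_elim (auto simp: BS)
  moreover have "F0 \<in> sets (F n)" using F0s by (simp add: sets_Pn)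
  ultimately show ?thesis by (intro bexI[where x=F0])
qed

lemma a_imp_b:
  assumes a: "stmt_a M F E Y R" and H: "\<forall>n. NN n \<in> compl_sets M (sets (F n) \<union> sigma_box M E n Y)"
  shows "b_witness M F E Y R G0 (SOME Fn. \<forall>n. Fn n \<in> sets (F n) \<and> (AE w in M. (R w = enat n \<longleftrightarrow> w \<in> Fn n \<and> box n Y w \<in> G0)))"
proof -
  have "\<forall>n. \<exists>F0. F0 \<in> sets (F n) \<and> (AE w in M. (R w = enat n \<longleftrightarrow> w \<in> F0 \<and> box n Y w \<in> G0))"
    using a_imp_b_n[OF a] H by (simp add: Bex_def)
  then have "\<exists>Fn. \<forall>n. Fn n \<in> sets (F n) \<and> (AE w in M. (R w = enat n \<longleftrightarrow> w \<in> Fn n \<and> box n Y w \<in> G0))"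
    by (rule choice)
  then have Fn: "\<forall>n. (SOME Fn. \<forall>n. Fn n \<in> sets (F n) \<and> (AE w in M. (R w = enat n \<longleftrightarrow> w \<in> Fn n \<and> box n Y w \<in> G0))) n \<in> sets (F n)
      \<and> (AE w in M. (R w = enat n \<longleftrightarrow> w \<in> (SOME Fn. \<forall>n. Fn n \<in> sets (F n) \<and> (AE w in M. (R w = enat n \<longleftrightarrow> w \<in> Fn n \<and> box n Y w \<in> G0))) n \<and> box n Y w \<in> G0))"
    by (rule someI_ex)
  show ?thesis unfolding b_witness_def using G0_sets Fn by simp
qed

lemma compl_mono: "k \<le> n \<Longrightarrow> compl_sets M (sets (F k)) \<subseteq> compl_sets M (sets (F n))"
  unfolding compl_sets_def using monoF[of k n] by (intro sigma_sets_subseteq) auto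

lemma i_imp_ii:
  assumes i: "stmt_i M F E Y R" and H: "\<forall>n. NN n \<in> compl_sets M (sets (F n) \<union> sigma_box M E n Y)"
  shows "stmt_ii M F R"
proof -
  have a: "stmt_a M F E Y R" and muL: "mu = LW" using i unfolding stmt_i_def by auto
  obtain G Fn where bw: "b_witness M F E Y R G Fn" using a_imp_b[OF a H] by blast
  have G: "G \<in> sets (seqspace E)" by (rule bwG[OF bw])
  have uL: "uniform_measure LW G = LW" using b_law[OF bw] muL by simp
  let ?Gc = "space (seqspace E) - G"
  have Gcs: "?Gc \<in> sets (seqspace E)" using G by (rule sets.compl_sets)
  have "emeasure LW ?Gc = emeasure (uniform_measure LW G) ?Gc" using uL by simp
  also have "\<dots> = emeasure LW (G \<inter> ?Gc) / emeasure LW G"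
    using G Gcs law_sets by (intro emeasure_uniform_measure) auto
  also have "G \<inter> ?Gc = {}" by blast
  finally have "emeasure LW ?Gc = 0" by simp
  then have LGc: "LL ?Gc = 0" using emeasure_law[OF Gcs] by simp
  have NNk: "NN k \<in> compl_sets M (sets (F k))" for k
  proof (cases "prob (NN k) > 0")
    case True
    have sp: "space M \<in> sets (F k)" using sets.top[of "F k"] spF by simp
    have "prob (space M \<inter> (box k Y -` ?Gc \<inter> space M)) = prob (space M) * LL ?Gc" by (rule fut_meas[OF sp Gcs])
    then have "emeasure M (box k Y -` ?Gc \<inter> space M) = 0" using LGc by (simp add: emeasure_eq_measure Int_absorb1)
    then have "box k Y -` ?Gc \<inter> space M \<in> null_sets M" using box_pre_sets[OF Gcs] by auto
    then have "AE w in M. w \<notin> box k Y -` ?Gc \<inter> space M" by (rule AE_not_in)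
    then have ae: "AE w in M. (w \<in> NN k \<longleftrightarrow> w \<in> Fn k)"
      using bwAE[OF bw True] AE_space by eventually_elim (auto simp: box_space)
    show ?thesis by (rule AE_compl[OF subF bwF[OF bw True] NN_sets ae])
  next
    case False
    then have "prob (NN k) = 0" using measure_nonneg[of M "NN k"] by linarith
    then have "NN k \<in> null_sets M" using NN_sets by (auto simp: emeasure_eq_measure)
    then show ?thesis unfolding compl_sets_def by (intro sigma_sets.Basic) simp
  qed
  show ?thesis unfolding stmt_ii_def
  proof
    fix n
    interpret S: sigma_algebra "space M" "compl_sets M (sets (F n))" by (rule compl_sa[OF subF])
    have eq: "{w \<in> space M. R w \<le> enat n} = (\<Union>k\<in>{..n}. NN k)"
    proof (rule set_eqI)
      fix w show "w \<in> {w \<in> space M. R w \<le> enat n} \<longleftrightarrow> w \<in> (\<Union>k\<in>{..n}. NN k)"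
        by (cases "R w") auto
    qed
    have "(\<Union>k\<in>{..n}. NN k) \<in> compl_sets M (sets (F n))"
      using NNk compl_mono by (intro S.finite_UN) auto
    then show "{w \<in> space M. R w \<le> enat n} \<in> compl_sets M (sets (F n))" unfolding eq .
  qed
qed

end

theorem theorem2p2:
  fixes M :: "'a measure" and F :: "nat \<Rightarrow> 'a measure" and E :: "'b measure"
    and Y :: "nat \<Rightarrow> 'a \<Rightarrow> 'b" and R :: "'a \<Rightarrow> enat"
  assumes "prob_space M"
    and "filtration (space M) F"
    and "\<And>n. sets (F n) \<subseteq> sets M"
    and "\<And>n. n \<ge> 1 \<Longrightarrow> Y n \<in> measurable (F n) E"
    and "\<And>i. prob_space.indep_set M (sets (F i))
                {Y (Suc i) -` A \<inter> space M | A. A \<in> sets E}"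
    and "\<And>i. distr M E (Y (Suc i)) = distr M E (Y 1)"
    and "R \<in> measurable M (count_space UNIV)"
    and "measure M {w \<in> space M. R w \<noteq> \<infinity>} > 0"
  shows "(stmt_b M F E Y R \<longrightarrow> stmt_a M F E Y R)
    \<and> (stmt_ii M F R \<longrightarrow> stmt_i M F E Y R)
    \<and> ((\<forall>n::nat. {w \<in> space M. R w = enat n} \<in> compl_sets M (sets (F n) \<union> sigma_box M E n Y))
        \<longrightarrow> (stmt_a M F E Y R \<longrightarrow> stmt_b M F E Y R) \<and> (stmt_i M F E Y R \<longrightarrow> stmt_ii M F R))
    \<and> (\<forall>G Fn. b_witness M F E Y R G Fn \<longrightarrow>
         (\<forall>G' Fn'. b_witness M F E Y R G' Fn' \<longrightarrow>
            emeasure (law M E Y) ((G - G') \<union> (G' - G)) = 0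
            \<and> (\<forall>n::nat. measure M {w \<in> space M. R w = enat n} > 0 \<longrightarrow>
                  (AE w in M. (w \<in> Fn n \<longleftrightarrow> w \<in> Fn' n))))
         \<and> distr (condP M R) (seqspace E) (boxR R Y) = uniform_measure (law M E Y) G
         \<and> (\<forall>A \<in> sets (seqspace E).
              measure (distr (condP M R) (seqspace E) (boxR R Y)) A
              = measure M {w \<in> space M. box 0 Y w \<in> A \<inter> G} / measure M {w \<in> space M. box 0 Y w \<in> G}))"
proof -
  interpret T: thm_setup M F E Y R
    using assms by (simp add: thm_setup_def thm_setup_axioms_def)
  have c1: "stmt_b M F E Y R \<longrightarrow> stmt_a M F E Y R"
    unfolding stmt_b_def using T.b_imp_a by blast
  have c2: "stmt_ii M F R \<longrightarrow> stmt_i M F E Y R" using T.ii_imp_i by blast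
  have c3: "(\<forall>n::nat. {w \<in> space M. R w = enat n} \<in> compl_sets M (sets (F n) \<union> sigma_box M E n Y))
        \<longrightarrow> (stmt_a M F E Y R \<longrightarrow> stmt_b M F E Y R) \<and> (stmt_i M F E Y R \<longrightarrow> stmt_ii M F R)"
  proof (intro impI conjI)
    assume H: "\<forall>n::nat. {w \<in> space M. R w = enat n} \<in> compl_sets M (sets (F n) \<union> sigma_box M E n Y)"
    show "stmt_a M F E Y R \<Longrightarrow> stmt_b M F E Y R"
      unfolding stmt_b_def using T.a_imp_b[OF _ H] by blast
    show "stmt_i M F E Y R \<Longrightarrow> stmt_ii M F R" using T.i_imp_ii[OF _ H] by blast
  qed
  have c4: "\<forall>G Fn. b_witness M F E Y R G Fn \<longrightarrow>
         (\<forall>G' Fn'. b_witness M F E Y R G' Fn' \<longrightarrow>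
            emeasure (law M E Y) ((G - G') \<union> (G' - G)) = 0
            \<and> (\<forall>n::nat. measure M {w \<in> space M. R w = enat n} > 0 \<longrightarrow>
                  (AE w in M. (w \<in> Fn n \<longleftrightarrow> w \<in> Fn' n))))
         \<and> distr (condP M R) (seqspace E) (boxR R Y) = uniform_measure (law M E Y) G
         \<and> (\<forall>A \<in> sets (seqspace E).
              measure (distr (condP M R) (seqspace E) (boxR R Y)) A
              = measure M {w \<in> space M. box 0 Y w \<in> A \<inter> G} / measure M {w \<in> space M. box 0 Y w \<in> G})"
  proof (intro allI impI)
    fix G Fn assume bw: "b_witness M F E Y R G Fn"
    have u: "\<forall>G' Fn'. b_witness M F E Y R G' Fn' \<longrightarrow>
            emeasure (law M E Y) ((G - G') \<union> (G' - G)) = 0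
            \<and> (\<forall>n::nat. measure M {w \<in> space M. R w = enat n} > 0 \<longrightarrow>
                  (AE w in M. (w \<in> Fn n \<longleftrightarrow> w \<in> Fn' n)))"
    proof (intro allI impI)
      fix G' Fn' assume bw': "b_witness M F E Y R G' Fn'"
      show "emeasure (law M E Y) ((G - G') \<union> (G' - G)) = 0
            \<and> (\<forall>n::nat. measure M {w \<in> space M. R w = enat n} > 0 \<longrightarrow>
                  (AE w in M. (w \<in> Fn n \<longleftrightarrow> w \<in> Fn' n)))"
        by (rule conjI[OF T.uniq(1)[OF bw bw'] T.uniq(2)[OF bw bw']])
    qed
    have l: "distr (condP M R) (seqspace E) (boxR R Y) = uniform_measure (law M E Y) G" by (rule T.b_law[OF bw])
    have m: "\<forall>A \<in> sets (seqspace E).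
              measure (distr (condP M R) (seqspace E) (boxR R Y)) A
              = measure M {w \<in> space M. box 0 Y w \<in> A \<inter> G} / measure M {w \<in> space M. box 0 Y w \<in> G}"
    proof
      fix A assume A: "A \<in> sets (seqspace E)"
      have e1: "{w \<in> space M. box 0 Y w \<in> A \<inter> G} = box 0 Y -` (A \<inter> G) \<inter> space M" by blast
      have e2: "{w \<in> space M. box 0 Y w \<in> G} = box 0 Y -` G \<inter> space M" by blast
      show "measure (distr (condP M R) (seqspace E) (boxR R Y)) A
         = measure M {w \<in> space M. box 0 Y w \<in> A \<inter> G} / measure M {w \<in> space M. box 0 Y w \<in> G}"
        unfolding e1 e2 by (rule T.measure_distr_condP[OF bw A])
    qed
    show "(\<forall>G' Fn'. b_witness M F E Y R G' Fn' \<longrightarrow>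
            emeasure (law M E Y) ((G - G') \<union> (G' - G)) = 0
            \<and> (\<forall>n::nat. measure M {w \<in> space M. R w = enat n} > 0 \<longrightarrow>
                  (AE w in M. (w \<in> Fn n \<longleftrightarrow> w \<in> Fn' n))))
         \<and> distr (condP M R) (seqspace E) (boxR R Y) = uniform_measure (law M E Y) G
         \<and> (\<forall>A \<in> sets (seqspace E).
              measure (distr (condP M R) (seqspace E) (boxR R Y)) A
              = measure M {w \<in> space M. box 0 Y w \<in> A \<inter> G} / measure M {w \<in> space M. box 0 Y w \<in> G})"
      by (rule conjI[OF u conjI[OF l m]])
  qed
  show ?thesis by (rule conjI[OF c1 conjI[OF c2 conjI[OF c3 c4]]])
qed

end
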